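(* Let $n>d$, $\mathbf X\in\mathbb R^{n\times d}$ with full column rank, $1\le k<d$, and $\mathbf y\in\mathbb R^n$ with $\mathbf y\notin\operatorname{col}(\mathbf X)$. Let $\hat{\boldsymbol\beta}_{\mathrm{OLS}}=(\mathbf X^T\mathbf X)^{-1}\mathbf X^T\mathbf y$ and let $F=\frac{(\|\mathbf y-\mathbf P_{-1:k}\mathbf y\|^2-\|\mathbf y-\mathbf P\mathbf y\|^2)/k}{\|\mathbf y-\mathbf P\mathbf y\|^2/(n-d)}$ be the $F$-test statistic for $H_{1:k}:\boldsymbol\beta_{1:k}=\mathbf 0$. Then $$F=\frac{\|\mathbf V_{1:k}^T\mathbf X_{1:k}\hat{\boldsymbol\beta}_{1:k,\mathrm{OLS}}\|^2/k}{\big(\hat\sigma_{1:k}^2-\|\mathbf V_{1:k}^T\mathbf X_{1:k}\hat{\boldsymbol\beta}_{1:k,\mathrm{OLS}}\|^2\big)/(n-d)}.$$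
   Context: $\mathbf A_i$, $\mathbf A_{1:i}$, $\mathbf A_{-1:i}$ denote the $i$-th column, first $i$ columns, and submatrix with first $i$ columns removed (similarly for vectors). $\mathbf P$ is the orthogonal projection onto the column space of $\mathbf X$, and $\mathbf P_{-1:i}$ onto that of $\mathbf X_{-1:i}$. $\mathbf V\in\mathbb R^{n\times(n-d+k)}$ has orthonormal columns spanning the orthogonal complement of the column space of $\mathbf X_{-1:k}$, with first $k$ columns $\mathbf V_i=(\mathbf I-\mathbf P_{-1:i})\mathbf X_i/\|(\mathbf I-\mathbf P_{-1:i})\mathbf X_i\|$. $\hat\sigma_{1:k}=\|(\mathbf I-\mathbf P_{-1:k})\mathbf y\|$. *)

theory Defs
  imports "Jordan_Normal_Form.Gauss_Jordan_Elimination" "Jordan_Normal_Form.DL_Rank"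
begin

definition sqnorm :: "real vec \<Rightarrow> real" where
  "sqnorm v = v \<bullet> v"

definition take_cols :: "nat \<Rightarrow> real mat \<Rightarrow> real mat" where
  "take_cols i A = mat_of_cols (dim_row A) (take i (cols A))"

(* A_{-1:i}: first i columns removed *)
definition drop_cols :: "nat \<Rightarrow> real mat \<Rightarrow> real mat" where
  "drop_cols i A = mat_of_cols (dim_row A) (drop i (cols A))"

definition take_vec :: "nat \<Rightarrow> real vec \<Rightarrow> real vec" where
  "take_vec i v = vec i (\<lambda>j. v $ j)"

definition inv_mat :: "real mat \<Rightarrow> real mat" where
  "inv_mat A = the (mat_inverse A)"

definition proj_mat :: "real mat \<Rightarrow> real mat" where
  "proj_mat A = A * inv_mat (A\<^sup>T * A) * A\<^sup>T"

definition beta_ols :: "real mat \<Rightarrow> real vec \<Rightarrow> real vec" where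
  "beta_ols X y = inv_mat (X\<^sup>T * X) *\<^sub>v (X\<^sup>T *\<^sub>v y)"

(* V_i (1-indexed, 1 \<le> i \<le> k): (I - P_{-1:i}) X_i / \<parallel>(I - P_{-1:i}) X_i\<parallel> *)
definition Vcol :: "real mat \<Rightarrow> nat \<Rightarrow> real vec" where
  "Vcol X i = (let w = (1\<^sub>m (dim_row X) - proj_mat (drop_cols i X)) *\<^sub>v col X (i - 1)
               in (1 / sqrt (sqnorm w)) \<cdot>\<^sub>v w)"

definition Vfirst :: "real mat \<Rightarrow> nat \<Rightarrow> real mat" where
  "Vfirst X k = mat_of_cols (dim_row X) (map (Vcol X) [1..<k+1])"

definition F_stat :: "real mat \<Rightarrow> real vec \<Rightarrow> nat \<Rightarrow> real" where
  "F_stat X y k =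
     ((sqnorm (y - proj_mat (drop_cols k X) *\<^sub>v y) - sqnorm (y - proj_mat X *\<^sub>v y)) / real k)
     / (sqnorm (y - proj_mat X *\<^sub>v y) / (real (dim_row X) - real (dim_col X)))"

definition sigma_hat :: "real mat \<Rightarrow> real vec \<Rightarrow> nat \<Rightarrow> real" where
  "sigma_hat X y k = sqrt (sqnorm ((1\<^sub>m (dim_row X) - proj_mat (drop_cols k X)) *\<^sub>v y))"

end

theory Submission
  imports Defs
begin


lemma sq_ge0: "(v::real vec) \<bullet> v \<ge> 0"
  unfolding scalar_prod_def by (intro sum_nonneg) auto

lemma sq_eq0: assumes "(v::real vec) \<bullet> v = 0" shows "v = 0\<^sub>v (dim_vec v)"
proof (intro eq_vecI)
  fix i assume i: "i < dim_vec (0\<^sub>v (dim_vec v))"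
  have "\<forall>j\<in>{0..<dim_vec v}. v $ j * v $ j = 0"
    using assms unfolding scalar_prod_def by (subst (asm) sum_nonneg_eq_0_iff) auto
  with i show "v $ i = 0\<^sub>v (dim_vec v) $ i" by auto
qed auto

lemma (in vec_space) rank_distinct:
  assumes A: "A \<in> carrier_mat n nc" and r: "rank A = nc"
  shows "distinct (cols A)"
proof (rule ccontr)
  assume nd: "\<not> distinct (cols A)"
  obtain S where S: "maximal S (\<lambda>T. T \<subseteq> set (cols A) \<and> lin_indpt T)"
    using maximal_exists[of "(\<lambda>T. T \<subseteq> set (cols A) \<and> lin_indpt T)" "card (set (cols A))" "{}"]
    by (meson List.finite_set card_mono empty_iff empty_subsetI finite_lin_indpt2 rev_finite_subset)
  then have "card S \<le> card (set (cols A))" by (simp add: card_mono maximal_def)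
  then have "card S < nc"
    using A cols_length card_length nd card_distinct carrier_matD(2) nat_less_le
    by (metis dual_order.antisym dual_order.trans)
  then show False
    using rank_card_indpt[OF A S] r by simp
qed

lemma rank_inj:
  assumes A: "(A::real mat) \<in> carrier_mat n nc" and r: "vec_space.rank n A = nc"
    and c: "(c::real vec) \<in> carrier_vec nc" and z: "A *\<^sub>v c = 0\<^sub>v n"
  shows "c = 0\<^sub>v nc"
proof (rule ccontr)
  assume "c \<noteq> 0\<^sub>v nc"
  have d: "distinct (cols A)" using vec_space.rank_distinct[OF A r] .
  have "module.lin_dep class_ring (module_vec TYPE(real) n) (set (cols A))"
    using vec_space.lin_depI[OF A c \<open>c \<noteq> 0\<^sub>v nc\<close> z d] .
  moreover have "module.lin_indpt class_ring (module_vec TYPE(real) n) (set (cols A))"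
    using vec_space.full_rank_lin_indpt[OF A r d] .
  ultimately show False by simp
qed



lemma gram_inv:
  assumes A: "(A::real mat) \<in> carrier_mat n m"
    and inj: "\<And>c. c \<in> carrier_vec m \<Longrightarrow> A *\<^sub>v c = 0\<^sub>v n \<Longrightarrow> c = 0\<^sub>v m"
  shows "inv_mat (A\<^sup>T * A) \<in> carrier_mat m m \<and> A\<^sup>T * A * inv_mat (A\<^sup>T * A) = 1\<^sub>m m"
proof -
  have G: "A\<^sup>T * A \<in> carrier_mat m m" using A by auto
  have "det (A\<^sup>T * A) \<noteq> 0"
  proof
    assume "det (A\<^sup>T * A) = 0"
    then obtain v where v: "v \<in> carrier_vec m" "v \<noteq> 0\<^sub>v m" "(A\<^sup>T * A) *\<^sub>v v = 0\<^sub>v m"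
      using det_0_iff_vec_prod_zero[OF G] by auto
    have "(A\<^sup>T *\<^sub>v (A *\<^sub>v v)) \<bullet> v = (A *\<^sub>v v) \<bullet> (A *\<^sub>v v)"
      using transpose_vec_mult_scalar[OF A v(1), of "A *\<^sub>v v"] A v by auto
    moreover have "A\<^sup>T *\<^sub>v (A *\<^sub>v v) = 0\<^sub>v m" using v A assoc_mult_mat_vec[of "A\<^sup>T" m n A m v] by auto
    ultimately have "(A *\<^sub>v v) \<bullet> (A *\<^sub>v v) = 0" using v by simp
    then have "A *\<^sub>v v = 0\<^sub>v n" using sq_eq0 A by fastforce
    then show False using inj v by auto
  qed
  then have U: "A\<^sup>T * A \<in> Units (ring_mat TYPE(real) m ())" using det_non_zero_imp_unit[OF G] by auto
  then obtain B where B: "mat_inverse (A\<^sup>T * A) = Some B"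
    using mat_inverse(1)[OF G, where b="()"] U by (cases "mat_inverse (A\<^sup>T * A)") blast+
  show ?thesis using mat_inverse(2)[OF G B] B unfolding inv_mat_def by auto
qed

lemma proj_orth:
  assumes A: "(A::real mat) \<in> carrier_mat n m"
    and inj: "\<And>c. c \<in> carrier_vec m \<Longrightarrow> A *\<^sub>v c = 0\<^sub>v n \<Longrightarrow> c = 0\<^sub>v m"
    and v: "v \<in> carrier_vec n"
  shows "proj_mat A *\<^sub>v v = A *\<^sub>v (inv_mat (A\<^sup>T * A) *\<^sub>v (A\<^sup>T *\<^sub>v v))"
    and "A\<^sup>T *\<^sub>v (v - proj_mat A *\<^sub>v v) = 0\<^sub>v m"
proof -
  note G = gram_inv[OF A inj]
  have I: "inv_mat (A\<^sup>T * A) \<in> carrier_mat m m" using G by auto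
  show 1: "proj_mat A *\<^sub>v v = A *\<^sub>v (inv_mat (A\<^sup>T * A) *\<^sub>v (A\<^sup>T *\<^sub>v v))"
  proof -
    have "(A * inv_mat (A\<^sup>T * A) * A\<^sup>T) *\<^sub>v v = (A * inv_mat (A\<^sup>T * A)) *\<^sub>v (A\<^sup>T *\<^sub>v v)"
      using A I v by (intro assoc_mult_mat_vec) auto
    also have "\<dots> = A *\<^sub>v (inv_mat (A\<^sup>T * A) *\<^sub>v (A\<^sup>T *\<^sub>v v))"
      using A I v by (intro assoc_mult_mat_vec) auto
    finally show ?thesis unfolding proj_mat_def .
  qed
  have "A\<^sup>T *\<^sub>v (proj_mat A *\<^sub>v v) = (A\<^sup>T * A * inv_mat (A\<^sup>T * A)) *\<^sub>v (A\<^sup>T *\<^sub>v v)"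
  proof -
    have "(A\<^sup>T * A * inv_mat (A\<^sup>T * A)) *\<^sub>v (A\<^sup>T *\<^sub>v v) = (A\<^sup>T * A) *\<^sub>v (inv_mat (A\<^sup>T * A) *\<^sub>v (A\<^sup>T *\<^sub>v v))"
      using A I v by (intro assoc_mult_mat_vec) auto
    also have "\<dots> = A\<^sup>T *\<^sub>v (A *\<^sub>v (inv_mat (A\<^sup>T * A) *\<^sub>v (A\<^sup>T *\<^sub>v v)))"
      using A I v by (intro assoc_mult_mat_vec) auto
    finally show ?thesis unfolding 1 by simp
  qed
  also have "\<dots> = A\<^sup>T *\<^sub>v v" using G A v by auto
  finally have "A\<^sup>T *\<^sub>v (proj_mat A *\<^sub>v v) = A\<^sup>T *\<^sub>v v" .
  moreover have "A\<^sup>T *\<^sub>v (v - proj_mat A *\<^sub>v v) = A\<^sup>T *\<^sub>v v - A\<^sup>T *\<^sub>v (proj_mat A *\<^sub>v v)"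
    using A v 1 I by (auto simp: mult_minus_distrib_mat_vec)
  ultimately show "A\<^sup>T *\<^sub>v (v - proj_mat A *\<^sub>v v) = 0\<^sub>v m" using A by auto
qed



definition pad :: "nat \<Rightarrow> nat \<Rightarrow> real vec \<Rightarrow> real vec" where
  "pad d m c = vec d (\<lambda>i. if i < m then 0 else c $ (i - m))"

locale lsq =
  fixes X :: "real mat" and n d :: nat
  assumes X: "X \<in> carrier_mat n d"
    and inj: "\<And>c. c \<in> carrier_vec d \<Longrightarrow> X *\<^sub>v c = 0\<^sub>v n \<Longrightarrow> c = 0\<^sub>v d"
begin

lemma drop_carrier: "drop_cols m X \<in> carrier_mat n (d - m)"
  using X unfolding drop_cols_def by (auto simp: mat_of_cols_def)

lemma drop_entry: assumes "i < n" "l < d - m"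
  shows "drop_cols m X $$ (i, l) = X $$ (i, m + l)"
  using X assms unfolding drop_cols_def mat_of_cols_def by (auto simp: add.commute)

lemma drop_col: assumes "l < d - m"
  shows "col (drop_cols m X) l = col X (m + l)"
  using drop_carrier[of m] X assms by (intro eq_vecI) (auto simp: drop_entry)

lemma drop_mult: assumes c: "c \<in> carrier_vec (d - m)" and m: "m \<le> d"
  shows "drop_cols m X *\<^sub>v c = X *\<^sub>v pad d m c"
proof (intro eq_vecI)
  show "dim_vec (drop_cols m X *\<^sub>v c) = dim_vec (X *\<^sub>v pad d m c)"
    using drop_carrier[of m] X by auto
  fix i assume "i < dim_vec (X *\<^sub>v pad d m c)"
  then have i: "i < n" using X by auto
  have "(X *\<^sub>v pad d m c) $ i = (\<Sum>j\<in>{0..<d}. X $$ (i, j) * pad d m c $ j)"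
    using X i by (auto simp: scalar_prod_def pad_def row_def)
  also have "\<dots> = (\<Sum>j\<in>{m..<d}. X $$ (i, j) * pad d m c $ j)"
    using m by (intro sum.mono_neutral_right) (auto simp: pad_def)
  also have "\<dots> = (\<Sum>l\<in>{0..<d-m}. X $$ (i, l + m) * pad d m c $ (l + m))"
    using sum.shift_bounds_nat_ivl[of "\<lambda>j. X $$ (i, j) * pad d m c $ j" 0 m "d - m"] m by simp
  also have "\<dots> = (\<Sum>l\<in>{0..<d-m}. drop_cols m X $$ (i, l) * c $ l)"
    using i by (intro sum.cong) (auto simp: pad_def drop_entry add.commute)
  also have "\<dots> = (drop_cols m X *\<^sub>v c) $ i"
    using drop_carrier[of m] i c by (auto simp: scalar_prod_def row_def)
  finally show "(drop_cols m X *\<^sub>v c) $ i = (X *\<^sub>v pad d m c) $ i" by simp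
qed

lemma drop_inj: assumes m: "m \<le> d" and c: "c \<in> carrier_vec (d - m)" and z: "drop_cols m X *\<^sub>v c = 0\<^sub>v n"
  shows "c = 0\<^sub>v (d - m)"
proof -
  have "pad d m c = 0\<^sub>v d" using inj[of "pad d m c"] z drop_mult[OF c m] by (auto simp: pad_def)
  then have "\<forall>l<d-m. c $ l = 0"
  proof (intro allI impI)
    fix l assume "l < d - m"
    then have "pad d m c $ (l + m) = c $ l" "l + m < d" by (auto simp: pad_def)
    then show "c $ l = 0" using \<open>pad d m c = 0\<^sub>v d\<close> by auto
  qed
  then show ?thesis using c by (intro eq_vecI) auto
qed

abbreviation Q where "Q m \<equiv> proj_mat (drop_cols m X)"

lemma Q_mem: assumes m: "m \<le> d" and v: "v \<in> carrier_vec n"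
  shows "\<exists>c\<in>carrier_vec d. (\<forall>i<m. c $ i = 0) \<and> Q m *\<^sub>v v = X *\<^sub>v c"
proof -
  let ?A = "drop_cols m X"
  have "Q m *\<^sub>v v = ?A *\<^sub>v (inv_mat (?A\<^sup>T * ?A) *\<^sub>v (?A\<^sup>T *\<^sub>v v))"
    using proj_orth(1)[OF drop_carrier drop_inj[OF m] v] by auto
  also have "\<dots> = X *\<^sub>v pad d m (inv_mat (?A\<^sup>T * ?A) *\<^sub>v (?A\<^sup>T *\<^sub>v v))"
  proof (rule drop_mult[OF _ m])
    have I: "inv_mat (?A\<^sup>T * ?A) \<in> carrier_mat (d - m) (d - m)"
      using gram_inv[OF drop_carrier drop_inj[OF m]] by auto
    have "?A\<^sup>T *\<^sub>v v \<in> carrier_vec (d - m)" using drop_carrier[of m] v by auto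
    then show "inv_mat (?A\<^sup>T * ?A) *\<^sub>v (?A\<^sup>T *\<^sub>v v) \<in> carrier_vec (d - m)"
      using I by auto
  qed
  finally show ?thesis using m by (intro bexI[of _ "pad d m _"]) (auto simp: pad_def)
qed

lemma Q_carrier: "v \<in> carrier_vec n \<Longrightarrow> Q m *\<^sub>v v \<in> carrier_vec n"
  using drop_carrier[of m] unfolding proj_mat_def carrier_vec_def by simp

lemma Q_orth: assumes m: "m \<le> l" "l < d" and v: "v \<in> carrier_vec n"
  shows "col X l \<bullet> (v - Q m *\<^sub>v v) = 0"
proof -
  let ?A = "drop_cols m X"
  have z: "?A\<^sup>T *\<^sub>v (v - Q m *\<^sub>v v) = 0\<^sub>v (d - m)"
    using proj_orth(2)[OF drop_carrier drop_inj v] m by auto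
  have "l - m < d - m" using m by auto
  then have "(?A\<^sup>T *\<^sub>v (v - Q m *\<^sub>v v)) $ (l - m) = col ?A (l - m) \<bullet> (v - Q m *\<^sub>v v)"
    using drop_carrier[of m] by auto
  also have "col ?A (l - m) = col X l" using drop_col[of "l - m" m] m by auto
  finally show ?thesis using z \<open>l - m < d - m\<close> by auto
qed

lemma G: assumes c: "c \<in> carrier_vec d" and cz: "\<forall>i<m. c $ i = 0" and u: "u \<in> carrier_vec n"
  and o: "\<And>l. m \<le> l \<Longrightarrow> l < d \<Longrightarrow> col X l \<bullet> u = 0"
  shows "(X *\<^sub>v c) \<bullet> u = 0"
proof -
  have "(X *\<^sub>v c) \<bullet> u = u \<bullet> (X *\<^sub>v c)" using X c u by (intro comm_scalar_prod) auto
  also have "\<dots> = (X\<^sup>T *\<^sub>v u) \<bullet> c" using transpose_vec_mult_scalar[OF X c u] by simp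
  also have "\<dots> = (\<Sum>j\<in>{0..<d}. (X\<^sup>T *\<^sub>v u) $ j * c $ j)" using c by (simp add: scalar_prod_def)
  also have "\<dots> = 0"
  proof (intro sum.neutral ballI)
    fix j assume j: "j \<in> {0..<d}"
    show "(X\<^sup>T *\<^sub>v u) $ j * c $ j = 0"
    proof (cases "j < m")
      case True then show ?thesis using cz by auto
    next
      case False
      then have "col X j \<bullet> u = 0" using o j by auto
      then show ?thesis using X j by auto
    qed
  qed
  finally show ?thesis .
qed

end


context lsq begin

lemma col_unit: "t < d \<Longrightarrow> col X t = X *\<^sub>v unit_vec d t"
  using X by (intro eq_vecI) (auto simp: row_def col_def)

definition w where "w t = col X t - Q (Suc t) *\<^sub>v col X t"
definition V where "V t = (1 / sqrt (w t \<bullet> w t)) \<cdot>\<^sub>v w t"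

lemma colX_carrier: "col X t \<in> carrier_vec n" using X by auto

lemma w_carrier: "w t \<in> carrier_vec n"
  unfolding w_def using colX_carrier Q_carrier by auto

lemma w_orth: assumes "Suc t \<le> l" "l < d" shows "col X l \<bullet> w t = 0"
  unfolding w_def using Q_orth[OF assms colX_carrier] .

lemma w_rep: assumes t: "t < d"
  obtains c2 where "c2 \<in> carrier_vec d" "\<forall>i<Suc t. c2 $ i = 0"
    "w t = X *\<^sub>v (unit_vec d t - c2)"
proof -
  obtain c2 where c2: "c2 \<in> carrier_vec d" "\<forall>i<Suc t. c2 $ i = 0" "Q (Suc t) *\<^sub>v col X t = X *\<^sub>v c2"
    using Q_mem[of "Suc t" "col X t"] t colX_carrier by auto
  have "w t = col X t - X *\<^sub>v c2" unfolding w_def c2(3) ..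
  also have "\<dots> = X *\<^sub>v (unit_vec d t - c2)"
    unfolding col_unit[OF t] using X c2(1) by (simp add: mult_minus_distrib_mat_vec)
  finally have "w t = X *\<^sub>v (unit_vec d t - c2)" .
  then show ?thesis using that c2 by auto
qed

lemma w_nz: assumes t: "t < d" shows "w t \<bullet> w t > 0"
proof -
  obtain c2 where c2: "c2 \<in> carrier_vec d" "\<forall>i<Suc t. c2 $ i = 0"
    "w t = X *\<^sub>v (unit_vec d t - c2)" using w_rep[OF t] by blast
  have "unit_vec d t - c2 \<noteq> 0\<^sub>v d"
  proof
    assume "unit_vec d t - c2 = 0\<^sub>v d"
    then have "(unit_vec d t - c2) $ t = 0" using t by simp
    then show False using c2 t by simp
  qed
  then have "w t \<noteq> 0\<^sub>v n" using inj[of "unit_vec d t - c2"] c2 by auto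
  moreover have "w t \<bullet> w t \<noteq> 0"
  proof
    assume "w t \<bullet> w t = 0"
    then have "w t = 0\<^sub>v (dim_vec (w t))" by (rule sq_eq0)
    then show False using \<open>w t \<noteq> 0\<^sub>v n\<close> w_carrier[of t] by auto
  qed
  ultimately show ?thesis using sq_ge0[of "w t"] by linarith
qed

lemma w_dot_orth: assumes t: "t < d" and u: "u \<in> carrier_vec n"
  and o: "\<And>l. t \<le> l \<Longrightarrow> l < d \<Longrightarrow> col X l \<bullet> u = 0"
  shows "w t \<bullet> u = 0"
proof -
  obtain c2 where c2: "c2 \<in> carrier_vec d" "\<forall>i<Suc t. c2 $ i = 0"
    "w t = X *\<^sub>v (unit_vec d t - c2)" using w_rep[OF t] by blast
  show ?thesis unfolding c2(3) using c2 t u o by (intro G[of _ t]) auto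
qed

end


context lsq begin

lemma step: assumes t: "t < d" and y: "y \<in> carrier_vec n"
  shows "(y - Q (Suc t) *\<^sub>v y) \<bullet> (y - Q (Suc t) *\<^sub>v y) = (y - Q t *\<^sub>v y) \<bullet> (y - Q t *\<^sub>v y) + (V t \<bullet> y)^2"
proof -
  define a where "a = y - Q t *\<^sub>v y"
  define b where "b = y - Q (Suc t) *\<^sub>v y"
  define D where "D = Q t *\<^sub>v y - Q (Suc t) *\<^sub>v y"
  have Qt: "Q t *\<^sub>v y \<in> carrier_vec n" and Qs: "Q (Suc t) *\<^sub>v y \<in> carrier_vec n" using Q_carrier y by auto
  have ac: "a \<in> carrier_vec n" and bc: "b \<in> carrier_vec n" and Dc: "D \<in> carrier_vec n"
    unfolding a_def b_def D_def using Qt Qs y by auto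
  have dimQ: "dim_row (Q m) = n" for m using drop_carrier[of m] unfolding proj_mat_def by simp
  have wc: "w t \<in> carrier_vec n" by (rule w_carrier)
  obtain ca where ca: "ca \<in> carrier_vec d" "\<forall>i<t. ca $ i = 0" "Q t *\<^sub>v y = X *\<^sub>v ca"
    using Q_mem[of t y] t y by auto
  obtain cb where cb: "cb \<in> carrier_vec d" "\<forall>i<Suc t. cb $ i = 0" "Q (Suc t) *\<^sub>v y = X *\<^sub>v cb"
    using Q_mem[of "Suc t" y] t y by auto
  obtain c2 where c2: "c2 \<in> carrier_vec d" "\<forall>i<Suc t. c2 $ i = 0"
    "w t = X *\<^sub>v (unit_vec d t - c2)" using w_rep[OF t] by blast
  have hD: "D = X *\<^sub>v (ca - cb)" unfolding D_def ca(3) cb(3) using X ca cb by (simp add: mult_minus_distrib_mat_vec)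
  have hb: "b = a + D" unfolding a_def b_def D_def using y Qt Qs by (intro eq_vecI) (auto simp: dimQ)
  have hy: "y = a + D + Q (Suc t) *\<^sub>v y" unfolding a_def D_def using y Qt Qs by (intro eq_vecI) (auto simp: dimQ)
  have oa: "col X l \<bullet> a = 0" if "t \<le> l" "l < d" for l unfolding a_def using Q_orth that y by auto
  have ob: "col X l \<bullet> b = 0" if "Suc t \<le> l" "l < d" for l unfolding b_def using Q_orth that y by auto
  have oD: "col X l \<bullet> D = 0" if "Suc t \<le> l" "l < d" for l
  proof -
    have "D = b - a" unfolding a_def b_def D_def using y Qt Qs by (intro eq_vecI) (auto simp: dimQ)
    then have "col X l \<bullet> D = col X l \<bullet> b - col X l \<bullet> a"
      using scalar_prod_minus_distrib[OF colX_carrier bc ac] by simp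
    then show ?thesis using oa ob that by auto
  qed
  have aD: "D \<bullet> a = 0" unfolding hD using ca cb ac oa t by (intro G[of _ t]) auto
  have pyth: "b \<bullet> b = a \<bullet> a + D \<bullet> D"
  proof -
    have "b \<bullet> b = a \<bullet> a + a \<bullet> D + (D \<bullet> a + D \<bullet> D)" unfolding hb using ac Dc
      by (simp add: add_scalar_prod_distrib[of _ n] scalar_prod_add_distrib[of _ n])
    moreover have "a \<bullet> D = D \<bullet> a" using ac Dc by (rule comm_scalar_prod)
    ultimately show ?thesis using aD by simp
  qed
  define \<gamma> where "\<gamma> = (ca - cb) $ t"
  define c' where "c' = (ca - cb) - \<gamma> \<cdot>\<^sub>v (unit_vec d t - c2)"
  have c'c: "c' \<in> carrier_vec d" unfolding c'_def using ca cb c2 by auto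
  have c'z: "\<forall>i<Suc t. c' $ i = 0"
  proof (intro allI impI)
    fix i assume i: "i < Suc t"
    then have id: "i < d" using t by auto
    show "c' $ i = 0"
    proof (cases "i = t")
      case True then show ?thesis unfolding c'_def \<gamma>_def using id ca cb c2 by auto
    next
      case False then have "i < t" using i by auto
      then show ?thesis unfolding c'_def using id ca cb c2 by (auto simp: unit_vec_def)
    qed
  qed
  define r where "r = X *\<^sub>v c'"
  have rc: "r \<in> carrier_vec n" unfolding r_def using X c'c by auto
  have hD2: "D = \<gamma> \<cdot>\<^sub>v w t + r"
  proof -
    have "ca - cb = \<gamma> \<cdot>\<^sub>v (unit_vec d t - c2) + c'" unfolding c'_def using ca cb c2
      by (intro eq_vecI) auto
    then have "D = X *\<^sub>v (\<gamma> \<cdot>\<^sub>v (unit_vec d t - c2) + c')" unfolding hD by simp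
    also have "\<dots> = X *\<^sub>v (\<gamma> \<cdot>\<^sub>v (unit_vec d t - c2)) + r" unfolding r_def
      using X c2 c'c by (intro mult_add_distrib_mat_vec) auto
    also have "X *\<^sub>v (\<gamma> \<cdot>\<^sub>v (unit_vec d t - c2)) = \<gamma> \<cdot>\<^sub>v w t" unfolding c2(3)
      using X c2 by (intro mult_mat_vec) auto
    finally show ?thesis .
  qed
  have rw: "r \<bullet> w t = 0" unfolding r_def using c'c c'z wc w_orth by (intro G[of _ "Suc t"]) auto
  have rD: "r \<bullet> D = 0" unfolding r_def using c'c c'z Dc oD by (intro G[of _ "Suc t"]) auto
  have DD: "D \<bullet> D = \<gamma> * (w t \<bullet> D)"
  proof -
    have "D \<bullet> D = (\<gamma> \<cdot>\<^sub>v w t) \<bullet> D + r \<bullet> D" using hD2 wc rc Dc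
      by (metis add_scalar_prod_distrib smult_carrier_vec)
    then show ?thesis using rD wc Dc by simp
  qed
  have wD: "w t \<bullet> D = \<gamma> * (w t \<bullet> w t)"
  proof -
    have "w t \<bullet> D = w t \<bullet> (\<gamma> \<cdot>\<^sub>v w t) + w t \<bullet> r" using hD2 wc rc
      by (metis scalar_prod_add_distrib smult_carrier_vec)
    moreover have "w t \<bullet> r = r \<bullet> w t" using wc rc by (rule comm_scalar_prod)
    ultimately show ?thesis using rw wc by simp
  qed
  have wy: "w t \<bullet> y = w t \<bullet> D"
  proof -
    have "w t \<bullet> y = w t \<bullet> a + w t \<bullet> D + w t \<bullet> (Q (Suc t) *\<^sub>v y)"
      using hy wc ac Dc Qs by (metis scalar_prod_add_distrib add_carrier_vec)
    moreover have "w t \<bullet> a = 0" using t ac oa by (intro w_dot_orth) auto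
    moreover have "w t \<bullet> (Q (Suc t) *\<^sub>v y) = (Q (Suc t) *\<^sub>v y) \<bullet> w t" using wc Qs by (rule comm_scalar_prod)
    moreover have "(Q (Suc t) *\<^sub>v y) \<bullet> w t = 0" unfolding cb(3) using cb wc w_orth by (intro G[of _ "Suc t"]) auto
    ultimately show ?thesis by simp
  qed
  have ww: "w t \<bullet> w t > 0" using w_nz[OF t] .
  have "(V t \<bullet> y)^2 = (w t \<bullet> y)^2 / (w t \<bullet> w t)"
    unfolding V_def using wc y ww by (simp add: power_divide)
  also have "\<dots> = D \<bullet> D" unfolding wy DD wD using ww by (simp add: power2_eq_square)
  finally show ?thesis using pyth unfolding a_def b_def by simp
qed

end


context lsq begin

lemma telescope: assumes k: "k \<le> d" and y: "y \<in> carrier_vec n"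
  shows "(y - Q k *\<^sub>v y) \<bullet> (y - Q k *\<^sub>v y) = (y - Q 0 *\<^sub>v y) \<bullet> (y - Q 0 *\<^sub>v y) + (\<Sum>t<k. (V t \<bullet> y)^2)"
  using k
proof (induction k)
  case 0 then show ?case by simp
next
  case (Suc k)
  then show ?case using step[of k y] y by simp
qed

lemma Q_carrier_mat: "Q m \<in> carrier_mat n n"
  using drop_carrier[of m] unfolding proj_mat_def by auto

lemma Vcol_eq: "Vcol X (Suc t) = V t"
proof -
  have "(1\<^sub>m n - Q (Suc t)) *\<^sub>v col X t = 1\<^sub>m n *\<^sub>v col X t - Q (Suc t) *\<^sub>v col X t"
    using Q_carrier_mat colX_carrier by (intro minus_mult_distrib_mat_vec) auto
  also have "\<dots> = w t" unfolding w_def using colX_carrier by simp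
  finally show ?thesis unfolding Vcol_def V_def Let_def sqnorm_def using X by simp
qed

lemma V_carrier: "V t \<in> carrier_vec n" unfolding V_def using w_carrier by simp

lemma drop0: "drop_cols 0 X = X" unfolding drop_cols_def by simp

lemma take_entry: assumes "i < n" "j < k" "k \<le> d"
  shows "take_cols k X $$ (i, j) = X $$ (i, j)"
  using X assms unfolding take_cols_def mat_of_cols_def by auto

lemma take_carrier: "k \<le> d \<Longrightarrow> take_cols k X \<in> carrier_mat n k"
  using X unfolding take_cols_def by (auto simp: mat_of_cols_def)

lemma take_mult: assumes c: "c \<in> carrier_vec k" and k: "k \<le> d"
  shows "take_cols k X *\<^sub>v c = X *\<^sub>v vec d (\<lambda>i. if i < k then c $ i else 0)"
proof (intro eq_vecI)
  show "dim_vec (take_cols k X *\<^sub>v c) = dim_vec (X *\<^sub>v vec d (\<lambda>i. if i < k then c $ i else 0))"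
    using take_carrier[OF k] X by auto
  fix i assume "i < dim_vec (X *\<^sub>v vec d (\<lambda>i. if i < k then c $ i else 0))"
  then have i: "i < n" using X by auto
  have "(X *\<^sub>v vec d (\<lambda>i. if i < k then c $ i else 0)) $ i = (\<Sum>j\<in>{0..<d}. X $$ (i, j) * (if j < k then c $ j else 0))"
    using X i by (auto simp: scalar_prod_def row_def)
  also have "\<dots> = (\<Sum>j\<in>{0..<k}. X $$ (i, j) * (if j < k then c $ j else 0))"
    using k by (intro sum.mono_neutral_right) auto
  also have "\<dots> = (\<Sum>j\<in>{0..<k}. take_cols k X $$ (i, j) * c $ j)"
    using i k by (intro sum.cong) (auto simp: take_entry)
  also have "\<dots> = (take_cols k X *\<^sub>v c) $ i"
    using take_carrier[OF k] i c by (auto simp: scalar_prod_def row_def)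
  finally show "(take_cols k X *\<^sub>v c) $ i = (X *\<^sub>v vec d (\<lambda>i. if i < k then c $ i else 0)) $ i" by simp
qed

lemma V_y: assumes t: "t < k" and k: "k \<le> d" and y: "y \<in> carrier_vec n"
  shows "V t \<bullet> (take_cols k X *\<^sub>v take_vec k (beta_ols X y)) = V t \<bullet> y"
proof -
  define \<beta> where "\<beta> = beta_ols X y"
  have bc: "\<beta> \<in> carrier_vec d" unfolding \<beta>_def beta_ols_def using gram_inv[OF X inj] X y
    by (meson mult_mat_vec_carrier transpose_carrier_mat)
  define b1 where "b1 = vec d (\<lambda>i. if i < k then take_vec k \<beta> $ i else 0)"
  define b2 where "b2 = vec d (\<lambda>i. if i < k then 0 else \<beta> $ i)"
  have b1c: "b1 \<in> carrier_vec d" and b2c: "b2 \<in> carrier_vec d" unfolding b1_def b2_def by auto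
  have tk: "take_cols k X *\<^sub>v take_vec k \<beta> = X *\<^sub>v b1" unfolding b1_def
    using k by (intro take_mult) (auto simp: take_vec_def)
  have sp: "\<beta> = b1 + b2" unfolding b1_def b2_def using bc by (intro eq_vecI) (auto simp: take_vec_def)
  have Q0: "Q 0 *\<^sub>v y = X *\<^sub>v \<beta>" unfolding drop0 \<beta>_def beta_ols_def using proj_orth(1)[OF X inj y] .
  have "X *\<^sub>v \<beta> = X *\<^sub>v b1 + X *\<^sub>v b2" unfolding sp using X b1c b2c by (intro mult_add_distrib_mat_vec) auto
  then have e1: "X *\<^sub>v b1 = Q 0 *\<^sub>v y - X *\<^sub>v b2" unfolding Q0 using X b1c b2c by auto
  have wc: "w t \<in> carrier_vec n" by (rule w_carrier)
  have X2c: "X *\<^sub>v b2 \<in> carrier_vec n" using X b2c by auto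
  have Q0c: "Q 0 *\<^sub>v y \<in> carrier_vec n" using Q_carrier y by auto
  have "w t \<bullet> (X *\<^sub>v b2) = (X *\<^sub>v b2) \<bullet> w t" using wc X2c by (rule comm_scalar_prod)
  also have "\<dots> = 0" using b2c wc w_orth t k by (intro G[of _ "Suc t"]) (auto simp: b2_def)
  finally have w2: "w t \<bullet> (X *\<^sub>v b2) = 0" .
  have w0: "w t \<bullet> (y - Q 0 *\<^sub>v y) = 0" using t k y Q0c Q_orth[of 0 _ y] by (intro w_dot_orth) auto
  have "w t \<bullet> (X *\<^sub>v b1) = w t \<bullet> (Q 0 *\<^sub>v y) - w t \<bullet> (X *\<^sub>v b2)"
    unfolding e1 using scalar_prod_minus_distrib[OF wc Q0c X2c] .
  also have "w t \<bullet> (Q 0 *\<^sub>v y) = w t \<bullet> y - w t \<bullet> (y - Q 0 *\<^sub>v y)"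
    using scalar_prod_minus_distrib[OF wc y Q0c] by simp
  finally have "w t \<bullet> (X *\<^sub>v b1) = w t \<bullet> y" using w2 w0 by simp
  then show ?thesis unfolding tk[unfolded \<beta>_def] V_def using wc y X b1c by simp
qed

end

theorem lemmaC4:
  fixes n d k :: nat and X :: "real mat" and y :: "real vec"
  assumes "n > d"
    and "X \<in> carrier_mat n d"
    and "vec_space.rank n X = d"
    and "1 \<le> k" and "k < d"
    and "y \<in> carrier_vec n"
    and "y \<notin> vec_space.col_space n X"
  shows "F_stat X y k =
     (sqnorm ((Vfirst X k)\<^sup>T *\<^sub>v (take_cols k X *\<^sub>v take_vec k (beta_ols X y))) / real k)
     / (((sigma_hat X y k)\<^sup>2
          - sqnorm ((Vfirst X k)\<^sup>T *\<^sub>v (take_cols k X *\<^sub>v take_vec k (beta_ols X y))))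
        / (real n - real d))"
proof -
  note Xc = assms(2) and y = assms(6)
  interpret lsq X n d
    using Xc rank_inj[OF Xc assms(3)] by unfold_locales auto
  have k: "k \<le> d" using assms(5) by simp
  define z where "z = take_cols k X *\<^sub>v take_vec k (beta_ols X y)"
  define S where "S = (\<Sum>t<k. (V t \<bullet> y)^2)"
  define A where "A = (y - Q 0 *\<^sub>v y) \<bullet> (y - Q 0 *\<^sub>v y)"
  have zc: "z \<in> carrier_vec n" unfolding z_def using take_carrier[OF k] by (auto simp: take_vec_def)
  have Vf: "Vfirst X k \<in> carrier_mat n k" unfolding Vfirst_def using Xc by (auto simp: mat_of_cols_def)
  have colVf: "col (Vfirst X k) t = V t" if "t < k" for t
  proof -
    have "col (Vfirst X k) t = map (Vcol X) [1..<k+1] ! t" unfolding Vfirst_def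
      using that V_carrier Vcol_eq Xc by (intro col_mat_of_cols) (auto simp del: upt_Suc)
    also have "\<dots> = Vcol X (Suc t)" using that by (simp del: upt_Suc)
    finally show ?thesis using Vcol_eq by simp
  qed
  have num: "sqnorm ((Vfirst X k)\<^sup>T *\<^sub>v z) = S"
  proof -
    have "sqnorm ((Vfirst X k)\<^sup>T *\<^sub>v z) = (\<Sum>t\<in>{0..<k}. ((Vfirst X k)\<^sup>T *\<^sub>v z) $ t * ((Vfirst X k)\<^sup>T *\<^sub>v z) $ t)"
      unfolding sqnorm_def scalar_prod_def using Vf by simp
    also have "\<dots> = (\<Sum>t\<in>{0..<k}. (V t \<bullet> y)^2)"
    proof (intro sum.cong refl)
      fix t assume "t \<in> {0..<k}"
      then have t: "t < k" by simp
      have "((Vfirst X k)\<^sup>T *\<^sub>v z) $ t = V t \<bullet> z" using Vf t colVf[OF t] by simp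
      also have "\<dots> = V t \<bullet> y" unfolding z_def using V_y[OF t k y] .
      finally show "((Vfirst X k)\<^sup>T *\<^sub>v z) $ t * ((Vfirst X k)\<^sup>T *\<^sub>v z) $ t = (V t \<bullet> y)^2"
        by (simp add: power2_eq_square)
    qed
    finally show ?thesis unfolding S_def by (simp add: atLeast0LessThan)
  qed
  have tel: "(y - Q k *\<^sub>v y) \<bullet> (y - Q k *\<^sub>v y) = A + S" unfolding A_def S_def using telescope[OF k y] .
  have sig: "(sigma_hat X y k)\<^sup>2 = A + S"
  proof -
    have "(1\<^sub>m n - Q k) *\<^sub>v y = 1\<^sub>m n *\<^sub>v y - Q k *\<^sub>v y"
      using Q_carrier_mat y by (intro minus_mult_distrib_mat_vec) auto
    then have "(1\<^sub>m n - Q k) *\<^sub>v y = y - Q k *\<^sub>v y" using y by simp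
    moreover have "0 \<le> A + S" using tel[symmetric] sq_ge0[of "y - Q k *\<^sub>v y"] by simp
    ultimately show ?thesis unfolding sigma_hat_def sqnorm_def using Xc tel by simp
  qed
  have F: "F_stat X y k = ((A + S - A) / real k) / (A / (real n - real d))"
  proof -
    have P: "proj_mat X = Q 0" by (simp add: drop0)
    show ?thesis unfolding F_stat_def sqnorm_def P using Xc tel unfolding A_def by simp
  qed
  show ?thesis unfolding z_def[symmetric] num sig F by simp
qed

end
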